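(* Let $k$ be a natural number. For all $n\geq 2^{k-1}k(2k-1)$, $$B_k^e(n)-B_k^o(n)=C_k^e(n+1)-C_k^o(n+1)=\tfrac12 D_{2k}(n+1).$$
   Context: All partitions are of positive integers into positive parts unless stated otherwise. $B_k^e(n)$ (resp. $B_k^o(n)$) is the number of partitions of $n$ having at least one odd part, with largest odd part $2\ell-1$, in which every part is odd except for at most $k-1$ even parts. These even parts are pairwise distinct, lie in $[2\ell+2,\,2\ell+2k-2]$, and their number is even (resp. odd). $C_k^e(n)$ (resp. $C_k^o(n)$) is the number of pairs $(\lambda,\ell)$ with $\ell\ge1$ and $\lambda$ a partition of $n$ satisfying three conditions: - $\lambda$ contains the part $2\ell$; - the parts of $\lambda$ not exceeding $\ell$ are pairwise distinct, while parts in $(\ell,2\ell]$ are unrestricted; - the parts larger than $2\ell$ are at most $k-1$ pairwise distinct even parts in $[2\ell+2,\,2\ell+2k-2]$, and their number is even (resp. odd). Equivalently, a partition admitting several choices of $\ell$ is counted once per choice, matching the generating function $\sum_{\ell\ge1}\frac{(-q;q)_\ell(\mp q^{2\ell+2};q^2)_{k-1}}{(q^{\ell+1};q)_\ell}q^{2\ell}$ for $C^e\pm C^o$. $D_j(n)$ is the number of partitions of $n$ into non-negative parts (the part $0$ is allowed) in which the smallest part appears exactly $j$ times and no other part is repeated. The convention is $D_j(0)=1$, and the generating function is $\sum_{n\ge0}D_j(n)q^n=\sum_{m\ge0}q^{mj}(-q^{m+1};q)_\infty$, where $(a;q)_N=\prod_{i=0}^{N-1}(1-aq^i)$. *)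

theory Defs
  imports Main "HOL-Library.Multiset"
begin

definition is_partition :: "nat multiset \<Rightarrow> nat \<Rightarrow> bool" where
  "is_partition p n \<longleftrightarrow> (\<forall>x\<in>#p. 0 < x) \<and> sum_mset p = n"

text \<open>Partitions counted by B_k^e (ev = True) resp. B_k^o (ev = False).
  The largest odd part is 2l-1, i.e. l = (largest odd part + 1) div 2.\<close>
definition B_set :: "nat \<Rightarrow> bool \<Rightarrow> nat \<Rightarrow> nat multiset set" where
  "B_set k ev n = {p. is_partition p n \<and> (\<exists>x\<in>#p. odd x) \<and>
     (let l = (Max {x. x \<in># p \<and> odd x} + 1) div 2 in
        \<forall>x\<in>#p. even x \<longrightarrow>
          (count p x = 1 \<and> 2*l + 2 \<le> x \<and> x \<le> 2*l + 2*k - 2)) \<and>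
     (even (size (filter_mset even p)) \<longleftrightarrow> ev)}"

definition B_e :: "nat \<Rightarrow> nat \<Rightarrow> nat" where "B_e k n = card (B_set k True n)"
definition B_o :: "nat \<Rightarrow> nat \<Rightarrow> nat" where "B_o k n = card (B_set k False n)"

definition C_set :: "nat \<Rightarrow> bool \<Rightarrow> nat \<Rightarrow> (nat multiset \<times> nat) set" where
  "C_set k ev n = {(p, l). 1 \<le> l \<and> is_partition p n \<and> 2*l \<in># p \<and>
     (\<forall>x\<in>#p. x \<le> l \<longrightarrow> count p x = 1) \<and>
     (\<forall>x\<in>#p. 2*l < x \<longrightarrow>
        (even x \<and> count p x = 1 \<and> 2*l + 2 \<le> x \<and> x \<le> 2*l + 2*k - 2)) \<and>
     (even (size (filter_mset (\<lambda>x. 2*l < x) p)) \<longleftrightarrow> ev)}"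

definition C_e :: "nat \<Rightarrow> nat \<Rightarrow> nat" where "C_e k n = card (C_set k True n)"
definition C_o :: "nat \<Rightarrow> nat \<Rightarrow> nat" where "C_o k n = card (C_set k False n)"

text \<open>Partitions of n into non-negative parts (0 allowed) where the smallest part
  appears exactly j times and no other part is repeated. For n = 0 (and j > 0) the
  only such partition is j copies of 0, matching D_j(0) = 1.\<close>
definition D_set :: "nat \<Rightarrow> nat \<Rightarrow> nat multiset set" where
  "D_set j n = {p. p \<noteq> {#} \<and> sum_mset p = n \<and>
     count p (Min (set_mset p)) = j \<and>
     (\<forall>x\<in>#p. x \<noteq> Min (set_mset p) \<longrightarrow> count p x = 1)}"

definition D :: "nat \<Rightarrow> nat \<Rightarrow> nat" where "D j n = card (D_set j n)"

end

theory Submission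
  imports Defs "HOL-Computational_Algebra.Formal_Power_Series"
begin

definition msets :: "nat set \<Rightarrow> nat \<Rightarrow> nat multiset set" where
  "msets A N = {p. set_mset p \<subseteq> A \<and> sum_mset p = N}"

definition gf :: "(nat \<Rightarrow> int) \<Rightarrow> nat \<Rightarrow> int fps" where
  "gf w a = Abs_fps (\<lambda>t. if a dvd t then w (t div a) else 0)"

lemma msets_empty: "msets {} N = (if N = 0 then {{#}} else {})"
  by (auto simp: msets_def)

lemma msets_insert:
  assumes "a \<notin> A" "0 < a"
  shows "msets (insert a A) N =
    (\<lambda>(c,q). replicate_mset c a + q) ` (SIGMA c:{0..N div a}. msets A (N - a*c))"
proof (rule set_eqI, rule iffI)
  fix p assume p: "p \<in> msets (insert a A) N"
  define c where "c = count p a"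
  define q where "q = filter_mset (\<lambda>x. x \<noteq> a) p"
  have pe: "p = replicate_mset c a + q"
    unfolding c_def q_def by (rule multiset_eqI) (auto simp: count_filter_mset)
  have "sum_mset p = a*c + sum_mset q" using pe by simp
  hence s: "a*c \<le> N" "sum_mset q = N - a*c" using p by (auto simp: msets_def)
  have "c \<le> N div a" using s(1) assms(2)
    by (metis div_le_mono nonzero_mult_div_cancel_left not_gr0)
  moreover have "set_mset q \<subseteq> A" using p by (auto simp: msets_def q_def)
  ultimately show "p \<in> (\<lambda>(c,q). replicate_mset c a + q) ` (SIGMA c:{0..N div a}. msets A (N - a*c))"
    using pe s by (auto simp: msets_def intro!: image_eqI[where x="(c,q)"])
next
  fix p assume "p \<in> (\<lambda>(c,q). replicate_mset c a + q) ` (SIGMA c:{0..N div a}. msets A (N - a*c))"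
  then obtain c q where p: "p = replicate_mset c a + q" "c \<le> N div a" "q \<in> msets A (N - a*c)"
    by auto
  have "a * c \<le> N" using p(2) assms(2)
    by (simp add: less_eq_div_iff_mult_less_eq mult.commute)
  thus "p \<in> msets (insert a A) N" using p by (auto simp: msets_def)
qed

lemma msets_insert_inj:
  assumes "a \<notin> A"
  shows "inj_on (\<lambda>(c,q). replicate_mset c a + q) (SIGMA c:{0..N div a}. msets A (N - a*c))"
proof (rule inj_onI, clarsimp)
  fix c q c' q'
  assume q: "q \<in> msets A (N - a*c)" and q': "q' \<in> msets A (N - a*c')"
    and e: "replicate_mset c a + q = replicate_mset c' a + q'"
  have "a \<notin># q" "a \<notin># q'" using q q' assms by (auto simp: msets_def)
  hence "count (replicate_mset c a + q) a = c" "count (replicate_mset c' a + q') a = c'"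
    by (auto simp: count_eq_zero_iff)
  hence "c = c'" using e by simp
  thus "c = c' \<and> q = q'" using e by simp
qed

lemma finite_msets: "finite A \<Longrightarrow> 0 \<notin> A \<Longrightarrow> finite (msets A N)"
proof (induction A arbitrary: N rule: finite_induct)
  case empty thus ?case by (simp add: msets_empty)
next
  case (insert a A)
  show ?case using insert by (subst msets_insert) auto
qed

lemma msets_sum:
  assumes "finite A" "0 \<notin> A"
  shows "(\<Sum>p\<in>msets A N. \<Prod>a\<in>A. w a (count p a)) = fps_nth (\<Prod>a\<in>A. gf (w a) a) N"
  using assms
proof (induction A arbitrary: N rule: finite_induct)
  case empty thus ?case by (simp add: msets_empty)
next
  case (insert a A)
  have a0: "0 < a" using insert by auto
  have cnt: "count (replicate_mset c a + q) b = count q b" if "b \<in> A" for c q b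
    using that insert(2) by auto
  have cnta: "count (replicate_mset c a + q) a = c" if "q \<in> msets A M" for c q M
    using that insert(2) by (auto simp: msets_def count_eq_zero_iff)
  have "(\<Sum>p\<in>msets (insert a A) N. \<Prod>b\<in>insert a A. w b (count p b))
     = (\<Sum>(c,q)\<in>(SIGMA c:{0..N div a}. msets A (N - a*c)).
          \<Prod>b\<in>insert a A. w b (count (replicate_mset c a + q) b))"
    by (subst msets_insert[OF insert(2) a0], subst sum.reindex[OF msets_insert_inj[OF insert(2)]])
       (simp add: case_prod_beta)
  also have "\<dots> = (\<Sum>c\<in>{0..N div a}. \<Sum>q\<in>msets A (N - a*c).
          w a c * (\<Prod>b\<in>A. w b (count q b)))"
  proof -
    have "(\<Prod>b\<in>insert a A. w b (count (replicate_mset c a + q) b)) = w a c * (\<Prod>b\<in>A. w b (count q b))"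
      if "q \<in> msets A M" for c q M
    proof -
      have "(\<Prod>b\<in>A. w b (count (replicate_mset c a + q) b)) = (\<Prod>b\<in>A. w b (count q b))"
        using insert(2) by (intro prod.cong) auto
      thus ?thesis using insert(1,2) cnta[OF that] by (simp add: prod.insert)
    qed
    thus ?thesis using insert(1,2,4)
      by (subst sum.Sigma[symmetric]) (auto intro!: sum.cong finite_msets)
  qed
  also have "\<dots> = (\<Sum>c\<in>{0..N div a}. w a c * fps_nth (\<Prod>b\<in>A. gf (w b) b) (N - a*c))"
    using insert.IH insert.prems by (simp add: sum_distrib_left[symmetric])
  also have "\<dots> = (\<Sum>t\<in>{0..N}. fps_nth (gf (w a) a) t * fps_nth (\<Prod>b\<in>A. gf (w b) b) (N - t))"
  proof -
    have "(\<Sum>t\<in>{0..N}. fps_nth (gf (w a) a) t * fps_nth (\<Prod>b\<in>A. gf (w b) b) (N - t))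
        = (\<Sum>t\<in>{t\<in>{0..N}. a dvd t}. fps_nth (gf (w a) a) t * fps_nth (\<Prod>b\<in>A. gf (w b) b) (N - t))"
      by (rule sum.mono_neutral_right) (auto simp: gf_def)
    also have "{t\<in>{0..N}. a dvd t} = (\<lambda>c. a*c) ` {0..N div a}"
    proof (rule set_eqI, rule iffI)
      fix t assume "t \<in> {t\<in>{0..N}. a dvd t}"
      then obtain c where "t = a*c" "a*c \<le> N" by auto
      thus "t \<in> (\<lambda>c. a*c) ` {0..N div a}" using a0
        by (auto intro!: image_eqI[where x=c] simp: less_eq_div_iff_mult_less_eq[OF a0] mult.commute)
    next
      fix t assume "t \<in> (\<lambda>c. a*c) ` {0..N div a}"
      thus "t \<in> {t\<in>{0..N}. a dvd t}" using a0
        by (auto simp: less_eq_div_iff_mult_less_eq[OF a0] mult.commute)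
    qed
    also have "(\<Sum>t\<in>(\<lambda>c. a*c) ` {0..N div a}. fps_nth (gf (w a) a) t * fps_nth (\<Prod>b\<in>A. gf (w b) b) (N - t))
       = (\<Sum>c\<in>{0..N div a}. w a c * fps_nth (\<Prod>b\<in>A. gf (w b) b) (N - a*c))"
      using a0 by (subst sum.reindex) (auto simp: inj_on_def gf_def)
    finally show ?thesis by simp
  qed
  also have "\<dots> = fps_nth (\<Prod>b\<in>insert a A. gf (w b) b) N"
    using insert by (simp add: prod.insert fps_mult_nth)
  finally show ?case .
qed

abbreviation qX :: "int fps" where "qX \<equiv> fps_X"

definition G :: "nat \<Rightarrow> int fps" where "G a = gf (\<lambda>c. 1) a"

lemma G_inv: "0 < a \<Longrightarrow> G a * (1 - qX^a) = 1"
proof (rule fps_ext)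
  fix n assume a: "0 < a"
  have "fps_nth (G a * (1 - qX^a)) n = fps_nth (G a) n - fps_nth (qX^a * G a) n"
    by (simp add: algebra_simps)
  also have "\<dots> = (if n = 0 then 1 else 0)"
  proof (cases "n < a")
    case True thus ?thesis using a by (auto simp: G_def gf_def fps_X_power_mult_nth dest: dvd_imp_le)
  next
    case False
    hence "a dvd n \<longleftrightarrow> a dvd (n - a)" by (simp add: dvd_minus_self)
    thus ?thesis using False a by (auto simp: G_def gf_def fps_X_power_mult_nth)
  qed
  finally show "fps_nth (G a * (1 - qX^a)) n = fps_nth 1 n" by simp
qed

lemma gf_le1: "0 < a \<Longrightarrow> gf (\<lambda>c. if c \<le> 1 then 1 else 0) a = 1 + qX^a"
proof (rule fps_ext)
  fix n assume a: "0 < a"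
  show "fps_nth (gf (\<lambda>c. if c \<le> 1 then 1 else 0) a) n = fps_nth (1 + qX^a) n"
  proof (cases "a dvd n")
    case True
    then obtain c where c: "n = a*c" by auto
    show ?thesis using a c by (cases "c = 0"; cases "c = 1") (auto simp: gf_def)
  next
    case False thus ?thesis using a by (cases "n = 0") (auto simp: gf_def)
  qed
qed

lemma gf_sgn: "0 < a \<Longrightarrow> gf (\<lambda>c. if c = 0 then 1 else if c = 1 then -1 else 0) a = 1 - qX^a"
proof (rule fps_ext)
  fix n assume a: "0 < a"
  show "fps_nth (gf (\<lambda>c. if c = 0 then 1 else if c = 1 then -1 else 0) a) n = fps_nth (1 - qX^a) n"
  proof (cases "a dvd n")
    case True
    then obtain c where c: "n = a*c" by auto
    show ?thesis using a c by (cases "c = 0"; cases "c = 1") (auto simp: gf_def)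
  next
    case False thus ?thesis using a by (cases "n = 0") (auto simp: gf_def)
  qed
qed

lemma gf_ge1: "0 < a \<Longrightarrow> gf (\<lambda>c. if 1 \<le> c then 1 else 0) a = qX^a * G a"
proof (rule fps_ext)
  fix n assume a: "0 < a"
  show "fps_nth (gf (\<lambda>c. if 1 \<le> c then 1 else 0) a) n = fps_nth (qX^a * G a) n"
  proof (cases "n < a")
    case True thus ?thesis using a by (auto simp: G_def gf_def fps_X_power_mult_nth dest: dvd_imp_le)
  next
    case False
    hence "a dvd n \<longleftrightarrow> a dvd (n - a)" by (simp add: dvd_minus_self)
    moreover have "a dvd n \<Longrightarrow> 1 \<le> n div a" using False a
      by (simp add: less_eq_div_iff_mult_less_eq)
    ultimately show ?thesis using False a by (auto simp: G_def gf_def fps_X_power_mult_nth)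
  qed
qed

lemma gf_const1: "gf (\<lambda>c. 1) a = G a" by (simp add: G_def)

declare power_Suc [simp del]

definition Pm :: "nat \<Rightarrow> int fps" where "Pm L = (\<Prod>i\<in>{1..L}. 1 + qX^i)"
definition Od :: "nat \<Rightarrow> int fps" where "Od l = (\<Prod>i<l. 1 - qX^(2*i+1))"
definition U :: "nat \<Rightarrow> int fps" where "U l = (\<Prod>i<l. G (2*i+1))"
definition Hi :: "nat \<Rightarrow> int fps" where "Hi l = (\<Prod>i\<in>{Suc l..2*l}. 1 - qX^i)"
definition Cp :: "nat \<Rightarrow> nat \<Rightarrow> int fps" where "Cp k l = (\<Prod>i\<in>{1..<k}. 1 - qX^(2*l+2*i))"
definition Hs :: "nat \<Rightarrow> nat \<Rightarrow> int fps" where "Hs k L = (\<Sum>l\<in>{1..L}. qX^(2*l) * Cp k l * U l)"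
definition Tp :: "nat \<Rightarrow> nat \<Rightarrow> int fps" where "Tp L m = (\<Prod>i\<in>{Suc m..L}. 1 + qX^i)"
definition Fs :: "nat \<Rightarrow> nat \<Rightarrow> int fps" where "Fs L j = (\<Sum>m\<in>{0..L}. qX^(j*m) * Tp L m)"
definition Qp :: "nat \<Rightarrow> int fps" where "Qp k = (\<Prod>i\<in>{1..k}. 1 - qX^(2*i))"
definition dd :: "nat \<Rightarrow> nat \<Rightarrow> int fps" where "dd k l = (\<Prod>i<k. 1 - qX^(2*l+2*i))"

fun Ek :: "nat \<Rightarrow> int fps" where
  "Ek 0 = 0"
| "Ek (Suc 0) = -1 - qX"
| "Ek (Suc (Suc k)) = (1 - qX^(2*Suc k)) * (1 - qX^(2*Suc k+1)) * Ek (Suc k) - 2*qX^(2*Suc k+1)*Qp (Suc k)"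

lemma U_Od: "U l * Od l = 1"
proof (induction l)
  case 0 thus ?case by (simp add: U_def Od_def)
next
  case (Suc l)
  have "U (Suc l) * Od (Suc l) = (U l * Od l) * (G (2*l+1) * (1 - qX^(2*l+1)))"
    by (simp add: U_def Od_def algebra_simps)
  also have "\<dots> = 1" using Suc G_inv[of "2*l+1"] by simp
  finally show ?case .
qed

lemma U_Suc: "U (Suc l) * (1 - qX^(2*l+1)) = U l"
proof -
  have "U (Suc l) = U l * G (2*l+1)" by (simp add: U_def)
  hence "U (Suc l) * (1 - qX^(2*l+1)) = U l * (G (2*l+1) * (1 - qX^(2*l+1)))"
    by (simp only: mult.assoc)
  moreover have g: "G (2*l+1) * (1 - qX^(2*l+1)) = 1" by (rule G_inv) simp
  ultimately show ?thesis by (simp only: g mult_1_right)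
qed

lemma X2U: "qX^(2*Suc l) * U (Suc l) = qX * (U (Suc l) - U l)"
proof -
  have "U (Suc l) - U l = U (Suc l) * qX^(2*l+1)"
    using U_Suc[of l] by (simp add: algebra_simps)
  hence "qX * (U (Suc l) - U l) = qX * (U (Suc l) * qX^(2*l+1))" by (simp only:)
  also have "\<dots> = U (Suc l) * (qX * qX^(2*l+1))" by (simp only: mult_ac)
  also have "qX * qX^(2*l+1) = qX^(2*Suc l)" by (simp add: power_Suc[symmetric])
  finally show ?thesis by (simp only: mult.commute)
qed

lemma one_minus_X_nz: "0 < a \<Longrightarrow> (1 - qX^a) \<noteq> 0"
proof
  assume "0 < a" "1 - qX^a = 0"
  hence "fps_nth (1 - qX^a) 0 = 0" by simp
  thus False using \<open>0 < a\<close> by simp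
qed

lemma Euler_fin: "Pm l * Od l = Hi l"
proof (induction l)
  case 0 thus ?case by (simp add: Pm_def Od_def Hi_def)
next
  case (Suc l)
  have P: "Pm (Suc l) = Pm l * (1 + qX^Suc l)" by (simp add: Pm_def)
  have O: "Od (Suc l) = Od l * (1 - qX^(2*l+1))" by (simp add: Od_def)
  have H1: "Hi (Suc l) * (1 - qX^Suc l) = (\<Prod>i\<in>{Suc l..Suc (Suc (2*l))}. 1 - qX^i)"
    unfolding Hi_def by (subst prod.atLeast_Suc_atMost[of "Suc l"]) (auto simp: algebra_simps)
  have H2: "(\<Prod>i\<in>{Suc l..Suc (Suc (2*l))}. 1 - qX^i) = Hi l * (1 - qX^(2*l+1)) * (1 - qX^(2*l+2))"
    unfolding Hi_def by simp
  have sq: "(1 + qX^Suc l) * (1 - qX^Suc l) = 1 - qX^(2*l+2)"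
  proof -
    have "qX^(2*l+2) = qX^Suc l * qX^Suc l" by (simp add: power_add[symmetric])
    thus ?thesis by (simp add: algebra_simps)
  qed
  have "Pm (Suc l) * Od (Suc l) * (1 - qX^Suc l) = (Pm l * Od l) * (1 - qX^(2*l+1)) * ((1 + qX^Suc l) * (1 - qX^Suc l))"
    unfolding P O by (simp only: mult_ac)
  also have "\<dots> = Hi l * (1 - qX^(2*l+1)) * (1 - qX^(2*l+2))" by (simp only: Suc.IH sq)
  also have "\<dots> = Hi (Suc l) * (1 - qX^Suc l)" by (simp only: H1 H2)
  finally have "Pm (Suc l) * Od (Suc l) * (1 - qX^Suc l) = Hi (Suc l) * (1 - qX^Suc l)" .
  moreover have "1 - qX^Suc l \<noteq> 0" by (rule one_minus_X_nz) simp
  ultimately show ?case by (metis mult_right_cancel)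
qed

lemma dvd_prod_1:
  assumes "finite I" "\<And>i. i \<in> I \<Longrightarrow> (qX^m) dvd (f i - 1)"
  shows "(qX^m) dvd (prod f I - 1)"
  using assms
proof (induction I rule: finite_induct)
  case empty thus ?case by simp
next
  case (insert i I)
  have "prod f (insert i I) - 1 = (f i - 1) * prod f I + (prod f I - 1)"
    using insert by (simp add: algebra_simps)
  also have "qX^m dvd \<dots>" using insert by (intro dvd_add dvd_mult2) auto
  finally show ?case .
qed

lemma dvd_1mX: "m \<le> a \<Longrightarrow> (qX^m) dvd ((1 - qX^a) - 1)"
proof -
  assume "m \<le> a"
  hence "qX^m dvd qX^a" by (rule le_imp_power_dvd)
  moreover have "(1 - qX^a) - 1 = - (qX^a)" by simp
  ultimately show ?thesis by simp
qed

lemma Hi_cong: "(qX^(Suc L)) dvd (Hi L - 1)"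
  unfolding Hi_def by (rule dvd_prod_1, simp, rule dvd_1mX, auto)

lemma dd_cong: "(qX^(Suc L)) dvd (dd k (Suc L) - 1)"
  unfolding dd_def by (rule dvd_prod_1, simp, rule dvd_1mX, auto)

lemma U_Pm: "(qX^(Suc L)) dvd (U L - Pm L)"
proof -
  have "U L - Pm L = - (U L * (Hi L - 1))"
    using U_Od[of L] Euler_fin[of L] by (simp add: algebra_simps)
    (metis mult.assoc mult.commute mult.left_neutral)
  thus ?thesis using Hi_cong[of L] by (simp add: dvd_mult)
qed

lemma ring_id:
  fixes X y z c u :: "'a::comm_ring_1"
  shows "X*X*y*y*(c*(1 - X*X*y*y*z*z))*u - (1 - z*z)*(1 - X*z*z)*(X*X*y*y*c*u)
       = X*z*z*(u*(c*(1 - X*X*y*y*z*z)) - u*(1 - X*y*y)*((1 - X*X*y*y)*c))"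
  by (simp add: algebra_simps)

lemma Cp_Suc: "1 \<le> k \<Longrightarrow> Cp (Suc k) l = Cp k l * (1 - qX^(2*l+2*k))"
  unfolding Cp_def by (simp add: prod.atLeastLessThan_Suc)

lemma dd_Suc2: "1 \<le> k \<Longrightarrow> dd k (Suc l) = Cp k l * (1 - qX^(2*l+2*k))"
proof -
  assume k: "1 \<le> k"
  have "Cp k l * (1 - qX^(2*l+2*k)) = (\<Prod>i\<in>{1..<Suc k}. 1 - qX^(2*l+2*i))"
    unfolding Cp_def using k by (simp add: prod.atLeastLessThan_Suc)
  also have "\<dots> = (\<Prod>i\<in>{0..<k}. 1 - qX^(2*l+2*Suc i))"
    by (simp add: prod.atLeast_Suc_lessThan_Suc_shift del: prod.op_ivl_Suc)
  also have "\<dots> = dd k (Suc l)"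
    unfolding dd_def lessThan_atLeast0 by (rule prod.cong) (auto simp: algebra_simps)
  finally show ?thesis by simp
qed

lemma dd_eq: "1 \<le> k \<Longrightarrow> dd k l = (1 - qX^(2*l)) * Cp k l"
  unfolding dd_def Cp_def lessThan_atLeast0
  by (subst prod.atLeast_Suc_lessThan) auto

lemma dd_1: "dd k 1 = Qp k"
  unfolding dd_def Qp_def One_nat_def prod.atLeast1_atMost_eq by (rule prod.cong) (auto simp: algebra_simps)

lemma term_id:
  assumes k: "1 \<le> k"
  shows "qX^(2*Suc l) * Cp (Suc k) (Suc l) * U (Suc l)
       - (1 - qX^(2*k)) * (1 - qX^(2*k+1)) * (qX^(2*Suc l) * Cp k (Suc l) * U (Suc l))
       = qX^(2*k+1) * (U (Suc l) * dd k (Suc (Suc l)) - U l * dd k (Suc l))"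
proof -
  define c where "c = Cp k (Suc l)"
  define u where "u = U (Suc l)"
  define y where "y = qX^l"
  define z where "z = qX^k"
  have e1: "qX^(2*Suc l) = qX*qX*y*y" unfolding y_def mult_2 power_add power_Suc
    by (simp only: mult_ac)
  have e2: "qX^(2*Suc l + 2*k) = qX*qX*y*y*z*z" unfolding y_def z_def mult_2 power_add power_Suc
    by (simp only: mult_ac)
  have e3: "qX^(2*k) = z*z" unfolding z_def by (simp only: mult_2 power_add)
  have e4: "qX^(2*k+1) = qX*z*z" unfolding z_def mult_2 power_add power_one_right by (simp only: mult_ac)
  have e5: "qX^(2*l+1) = qX*y*y" unfolding y_def mult_2 power_add power_one_right by (simp only: mult_ac)
  have u0: "U l = u * (1 - qX*y*y)" using U_Suc[of l] unfolding u_def e5 by simp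
  have C: "Cp (Suc k) (Suc l) = c*(1 - qX*qX*y*y*z*z)" unfolding c_def using Cp_Suc[OF k] e2 by simp
  have D2: "dd k (Suc (Suc l)) = c*(1 - qX*qX*y*y*z*z)" unfolding c_def using dd_Suc2[OF k] e2 by simp
  have D1: "dd k (Suc l) = (1 - qX*qX*y*y)*c" unfolding c_def using dd_eq[OF k] e1 by simp
  show ?thesis unfolding e1 e3 e4 u0 C D2 D1 u_def[symmetric] c_def[symmetric]
    by (rule ring_id)
qed

lemma Hs_Suc:
  assumes k: "1 \<le> k"
  shows "Hs (Suc k) L = (1 - qX^(2*k)) * (1 - qX^(2*k+1)) * Hs k L + qX^(2*k+1) * (U L * dd k (Suc L) - Qp k)"
proof -
  define A where "A = (1 - qX^(2*k)) * (1 - qX^(2*k+1))"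
  define f where "f m = U m * dd k (Suc m)" for m
  have "Hs (Suc k) L - A * Hs k L = (\<Sum>l\<in>{1..L}. qX^(2*l) * Cp (Suc k) l * U l - A * (qX^(2*l) * Cp k l * U l))"
    unfolding Hs_def by (simp add: sum_subtractf sum_distrib_left)
  also have "\<dots> = (\<Sum>l<L. qX^(2*Suc l) * Cp (Suc k) (Suc l) * U (Suc l) - A * (qX^(2*Suc l) * Cp k (Suc l) * U (Suc l)))"
    by (simp only: One_nat_def sum.atLeast1_atMost_eq)
  also have "\<dots> = (\<Sum>l<L. qX^(2*k+1) * (f (Suc l) - f l))"
    unfolding A_def f_def by (rule sum.cong[OF refl]) (rule term_id[OF k])
  also have "\<dots> = qX^(2*k+1) * (\<Sum>l\<in>{0..<L}. f (Suc l) - f l)"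
    by (simp add: sum_distrib_left lessThan_atLeast0)
  also have "\<dots> = qX^(2*k+1) * (f L - f 0)" by (simp add: sum_Suc_diff')
  also have "\<dots> = qX^(2*k+1) * (U L * dd k (Suc L) - Qp k)"
    by (simp add: f_def U_def dd_1[simplified])
  finally show ?thesis unfolding A_def by (simp add: algebra_simps)
qed

lemma Hs_1: "Hs 1 L = qX * (U L - 1)"
proof -
  have "Hs 1 L = (\<Sum>l\<in>{1..L}. qX^(2*l) * U l)" unfolding Hs_def Cp_def by simp
  also have "\<dots> = (\<Sum>l<L. qX^(2*Suc l) * U (Suc l))"
    by (simp only: One_nat_def sum.atLeast1_atMost_eq)
  also have "\<dots> = (\<Sum>l\<in>{0..<L}. qX * (U (Suc l) - U l))"
    unfolding lessThan_atLeast0 by (rule sum.cong[OF refl]) (rule X2U)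
  also have "\<dots> = qX * (U L - U 0)"
    by (simp add: sum_distrib_left[symmetric] sum_Suc_diff')
  finally show ?thesis by (simp add: U_def)
qed

lemma Tp_0: "Tp L 0 = Pm L" by (simp add: Tp_def Pm_def)
lemma Tp_L: "Tp L L = 1" by (simp add: Tp_def)
lemma Tp_step: "m < L \<Longrightarrow> Tp L m = (1 + qX^Suc m) * Tp L (Suc m)"
  unfolding Tp_def by (subst prod.atLeast_Suc_atMost) auto

lemma Fs_rec:
  assumes L: "1 \<le> L"
  shows "Fs L (Suc j) = 2 * Pm L - (1 - qX^j) * Fs L j - qX^(j * Suc L)"
proof -
  obtain L' where L': "L = Suc L'" using L by (cases L) auto
  have "Fs L j + Fs L (Suc j) = (\<Sum>m\<in>{0..L}. qX^(j*m) * (1 + qX^m) * Tp L m)"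
    unfolding Fs_def by (simp add: sum.distrib[symmetric] power_add algebra_simps)
  also have "\<dots> = 2 * Pm L + (\<Sum>m\<in>{0..L'}. qX^(j*Suc m) * Tp L m)"
  proof -
    have "(\<Sum>m\<in>{0..L}. qX^(j*m) * (1 + qX^m) * Tp L m)
       = 2 * Tp L 0 + (\<Sum>m\<in>{0..L'}. qX^(j*Suc m) * (1 + qX^Suc m) * Tp L (Suc m))"
      unfolding L' by (subst sum.atLeast0_atMost_Suc_shift) simp
    also have "(\<Sum>m\<in>{0..L'}. qX^(j*Suc m) * (1 + qX^Suc m) * Tp L (Suc m))
        = (\<Sum>m\<in>{0..L'}. qX^(j*Suc m) * Tp L m)"
      by (rule sum.cong) (auto simp: Tp_step L' mult.assoc)
    finally show ?thesis by (simp add: Tp_0)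
  qed
  finally have a: "Fs L j + Fs L (Suc j) = 2 * Pm L + (\<Sum>m\<in>{0..L'}. qX^(j*Suc m) * Tp L m)" .
  have "qX^j * Fs L j = (\<Sum>m\<in>{0..L}. qX^(j*Suc m) * Tp L m)"
    unfolding Fs_def by (simp add: sum_distrib_left power_add mult.assoc)
  also have "\<dots> = (\<Sum>m\<in>{0..L'}. qX^(j*Suc m) * Tp L m) + qX^(j*Suc L)"
    unfolding L' by (simp add: Tp_L)
  finally have b: "qX^j * Fs L j = (\<Sum>m\<in>{0..L'}. qX^(j*Suc m) * Tp L m) + qX^(j*Suc L)" .
  from a b show ?thesis by (simp add: algebra_simps)
qed

lemma dvd_Xpow_mult: "1 \<le> c \<Longrightarrow> qX^(Suc L) dvd qX^(c * Suc L)"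
  by (rule le_imp_power_dvd) (use mult_le_mono1[of 1 c "Suc L"] in simp)

lemma main_dvd:
  assumes L: "1 \<le> L"
  shows "qX^(Suc L) dvd (2 * Hs (Suc k) L - Fs L (2 * Suc k) - Ek (Suc k))"
proof (induction k)
  case 0
  have F1: "Fs L 1 = 2 * Pm L - 1" using Fs_rec[OF L, of 0] by simp
  have F2: "Fs L 2 = 2 * Pm L - (1 - qX) * Fs L 1 - qX^(Suc L)"
    using Fs_rec[OF L, of 1] by (simp add: numeral_2_eq_2)
  have "2 * Hs 1 L - Fs L 2 - (-1 - qX) = 2 * qX * (U L - Pm L) + qX^(Suc L)"
    unfolding Hs_1 F2 F1 by (simp add: algebra_simps)
  moreover have "2 * Hs (Suc 0) L - Fs L (2 * Suc 0) - Ek (Suc 0) = 2 * Hs 1 L - Fs L 2 - (-1 - qX)"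
    by simp
  ultimately have "2 * Hs (Suc 0) L - Fs L (2 * Suc 0) - Ek (Suc 0) = 2 * qX * (U L - Pm L) + qX^(Suc L)"
    by simp
  moreover have "qX^(Suc L) dvd 2 * qX * (U L - Pm L) + qX^(Suc L)"
    using U_Pm[of L] by (intro dvd_add dvd_mult) auto
  ultimately show ?case by simp
next
  case (Suc k)
  define k' where "k' = Suc k"
  have k': "1 \<le> k'" by (simp add: k'_def)
  define A where "A = (1 - qX^(2*k')) * (1 - qX^(2*k'+1))"
  have H: "Hs (Suc k') L = A * Hs k' L + qX^(2*k'+1) * (U L * dd k' (Suc L) - Qp k')"
    unfolding A_def by (rule Hs_Suc[OF k'])
  have Fa: "Fs L (2 * Suc k') = 2 * Pm L - (1 - qX^(2*k'+1)) * Fs L (Suc (2*k')) - qX^((2*k'+1) * Suc L)"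
    using Fs_rec[OF L, of "Suc (2*k')"] by simp
  have Fb: "Fs L (Suc (2*k')) = 2 * Pm L - (1 - qX^(2*k')) * Fs L (2*k') - qX^((2*k') * Suc L)"
    using Fs_rec[OF L, of "2*k'"] by simp
  have E: "Ek (Suc k') = A * Ek k' - 2*qX^(2*k'+1)*Qp k'"
    unfolding A_def k'_def by (simp add: power_Suc)
  have eq: "2 * Hs (Suc k') L - Fs L (2 * Suc k') - Ek (Suc k')
     = A * (2 * Hs k' L - Fs L (2 * k') - Ek k')
       + 2 * qX^(2*k'+1) * (U L * (dd k' (Suc L) - 1) + (U L - Pm L))
       - (1 - qX^(2*k'+1)) * qX^((2*k') * Suc L) + qX^((2*k'+1) * Suc L)"
    unfolding H Fa Fb E A_def by (simp add: algebra_simps)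
  have "qX^(Suc L) dvd A * (2 * Hs k' L - Fs L (2 * k') - Ek k')
       + 2 * qX^(2*k'+1) * (U L * (dd k' (Suc L) - 1) + (U L - Pm L))
       - (1 - qX^(2*k'+1)) * qX^((2*k') * Suc L) + qX^((2*k'+1) * Suc L)"
  proof -
    have d1: "qX^(Suc L) dvd A * (2 * Hs k' L - Fs L (2 * k') - Ek k')"
      using Suc.IH[folded k'_def] by (rule dvd_mult)
    have d2: "qX^(Suc L) dvd 2 * qX^(2*k'+1) * (U L * (dd k' (Suc L) - 1) + (U L - Pm L))"
      by (rule dvd_mult, rule dvd_add, rule dvd_mult, rule dd_cong, rule U_Pm)
    have d3: "qX^(Suc L) dvd (1 - qX^(2*k'+1)) * qX^((2*k') * Suc L)"
      using k' by (intro dvd_mult dvd_Xpow_mult) simp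
    have d4: "qX^(Suc L) dvd qX^((2*k'+1) * Suc L)"
      by (intro dvd_Xpow_mult) simp
    show ?thesis by (rule dvd_add[OF dvd_diff[OF dvd_add[OF d1 d2] d3] d4])
  qed
  thus ?case using eq by (simp add: k'_def)
qed

definition pdeg :: "int fps \<Rightarrow> nat \<Rightarrow> bool" where
  "pdeg f d \<longleftrightarrow> (\<forall>i>d. fps_nth f i = 0)"

lemma pdeg_mono: "pdeg f d \<Longrightarrow> d \<le> e \<Longrightarrow> pdeg f e" by (auto simp: pdeg_def)
lemma pdeg_add: "pdeg f d \<Longrightarrow> pdeg g d \<Longrightarrow> pdeg (f + g) d" by (auto simp: pdeg_def)
lemma pdeg_diff: "pdeg f d \<Longrightarrow> pdeg g d \<Longrightarrow> pdeg (f - g) d" by (auto simp: pdeg_def)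
lemma pdeg_uminus: "pdeg f d \<Longrightarrow> pdeg (- f) d" by (auto simp: pdeg_def)
lemma pdeg_mult: "pdeg f d \<Longrightarrow> pdeg g e \<Longrightarrow> pdeg (f * g) (d + e)"
  unfolding pdeg_def
proof (intro allI impI)
  fix i assume f: "\<forall>i>d. fps_nth f i = 0" and g: "\<forall>i>e. fps_nth g i = 0" and i: "d + e < i"
  have "fps_nth (f * g) i = (\<Sum>j=0..i. fps_nth f j * fps_nth g (i - j))" by (rule fps_mult_nth)
  also have "\<dots> = 0"
  proof (rule sum.neutral, rule ballI)
    fix j assume "j \<in> {0..i}"
    show "fps_nth f j * fps_nth g (i - j) = 0"
    proof (cases "j > d")
      case True thus ?thesis using f by simp
    next
      case False hence "i - j > e" using i by simp
      thus ?thesis using g by simp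
    qed
  qed
  finally show "fps_nth (f * g) i = 0" .
qed
lemma pdeg_1: "pdeg 1 d" by (auto simp: pdeg_def)
lemma pdeg_X: "pdeg qX 1" by (auto simp: pdeg_def fps_X_def)
lemma pdeg_Xp: "pdeg (qX^a) a" by (auto simp: pdeg_def)
lemma pdeg_1mXp: "pdeg (1 - qX^a) a" by (auto simp: pdeg_def)
lemma pdeg_2: "pdeg 2 d" by (auto simp: pdeg_def numeral_fps_const)

lemma pdeg_Qp: "pdeg (Qp k) (k * Suc k)"
proof (induction k)
  case 0 thus ?case by (simp add: Qp_def pdeg_1)
next
  case (Suc k)
  have "Qp (Suc k) = Qp k * (1 - qX^(2*Suc k))" by (simp add: Qp_def)
  moreover have "pdeg (Qp k * (1 - qX^(2*Suc k))) (k * Suc k + 2 * Suc k)"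
    by (rule pdeg_mult[OF Suc pdeg_1mXp])
  ultimately show ?case by (auto elim: pdeg_mono)
qed

lemma pdeg_Ek: "pdeg (Ek (Suc k)) (Suc k * (2 * Suc k - 1))"
proof (induction k)
  case 0 thus ?case by (auto simp: pdeg_def fps_X_def)
next
  case (Suc k)
  define k' where "k' = Suc k"
  have IH: "pdeg (Ek k') (k' * (2 * k' - 1))" using Suc by (simp add: k'_def)
  have e: "Ek (Suc k') = (1 - qX^(2*k')) * (1 - qX^(2*k'+1)) * Ek k' - 2*qX^(2*k'+1)*Qp k'"
    by (simp add: k'_def power_Suc)
  have d1: "pdeg ((1 - qX^(2*k')) * (1 - qX^(2*k'+1)) * Ek k') (2*k' + (2*k'+1) + k' * (2 * k' - 1))"
    by (intro pdeg_mult pdeg_1mXp IH)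
  have d2: "pdeg (2*qX^(2*k'+1)*Qp k') (0 + (2*k'+1) + k' * Suc k')"
    by (intro pdeg_mult pdeg_2 pdeg_Xp pdeg_Qp)
  have b1: "2*k' + (2*k'+1) + k' * (2 * k' - 1) \<le> Suc k' * (2 * Suc k' - 1)"
    by (simp add: k'_def algebra_simps)
  have b2: "0 + (2*k'+1) + k' * Suc k' \<le> Suc k' * (2 * Suc k' - 1)"
    by (simp add: k'_def algebra_simps)
  show ?case unfolding k'_def[symmetric] e
    by (intro pdeg_diff pdeg_mono[OF d1 b1] pdeg_mono[OF d2 b2])
qed

lemma dvd_Xpow_nth: "qX^m dvd f \<Longrightarrow> i < m \<Longrightarrow> fps_nth f i = 0"
  by (auto simp: fps_X_power_mult_nth elim!: dvdE)

lemma main_coeff: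
  assumes k: "1 \<le> k" and N: "k * (2 * k - 1) < N"
  shows "2 * fps_nth (Hs k N) N = fps_nth (Fs N (2 * k)) N"
proof -
  obtain k0 where k0: "k = Suc k0" using k by (cases k) auto
  have N1: "1 \<le> N" using N k by (cases N) auto
  have "fps_nth (2 * Hs k N - Fs N (2 * k) - Ek k) N = 0"
    using main_dvd[OF N1, of k0] unfolding k0 by (rule dvd_Xpow_nth) simp
  moreover have "fps_nth (Ek k) N = 0" using pdeg_Ek[of k0] N unfolding k0 pdeg_def by simp
  moreover have "fps_nth (2 * Hs k N) N = 2 * fps_nth (Hs k N) N"
    by (simp add: numeral_fps_const)
  ultimately show ?thesis by simp
qed

lemma le_div_iff': "0 < j \<Longrightarrow> m \<le> N div j \<longleftrightarrow> j*m \<le> (N::nat)"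
  by (simp add: less_eq_div_iff_mult_less_eq mult.commute)

lemma mem_le_sum_mset: "(x::nat) \<in># M \<Longrightarrow> x \<le> sum_mset M"
  by (metis le_add1 multi_member_split sum_mset.add_mset)

lemma msets_bound: "p \<in> msets A N \<Longrightarrow> x \<in># p \<Longrightarrow> x \<le> N"
  using mem_le_sum_mset by (auto simp: msets_def)

lemma prod_indicator:
  "finite A \<Longrightarrow> (\<Prod>a\<in>A. (if P a then 1 else 0) :: int) = (if \<forall>a\<in>A. P a then 1 else 0)"
  by (induction A rule: finite_induct) auto

lemma card_filter_sum:
  assumes "finite S"
  shows "int (card {q\<in>S. Q q}) = (\<Sum>q\<in>S. if Q q then 1 else 0)"
proof -
  have "(\<Sum>q\<in>{q\<in>S. Q q}. (1::int)) = (\<Sum>q\<in>S. if Q q then 1 else 0)"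
    using assms by (rule sum.inter_filter)
  thus ?thesis by simp
qed

lemma distinct_count:
  assumes "finite A" "0 \<notin> A"
  shows "int (card {q\<in>msets A M. \<forall>a\<in>A. count q a \<le> 1}) = fps_nth (\<Prod>a\<in>A. 1 + qX^a) M"
proof -
  have "int (card {q\<in>msets A M. \<forall>a\<in>A. count q a \<le> 1})
      = (\<Sum>q\<in>msets A M. \<Prod>a\<in>A. (\<lambda>a c. if c \<le> 1 then 1 else 0) a (count q a))"
    using assms by (simp add: card_filter_sum finite_msets prod_indicator)
  also have "\<dots> = fps_nth (\<Prod>a\<in>A. gf (\<lambda>c. if c \<le> 1 then 1 else 0) a) M"
    using assms by (rule msets_sum)
  also have "(\<Prod>a\<in>A. gf (\<lambda>c. if c \<le> 1 then 1 else 0) a) = (\<Prod>a\<in>A. 1 + qX^a)"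
    using assms by (intro prod.cong refl gf_le1) (auto intro: Nat.gr0I)
  finally show ?thesis .
qed

definition Tset :: "nat \<Rightarrow> nat \<Rightarrow> nat \<Rightarrow> nat multiset set" where
  "Tset j N m = {q\<in>msets {Suc m..N} (N - j*m). \<forall>a\<in>{Suc m..N}. count q a \<le> 1}"

lemma D_decomp:
  assumes j: "1 \<le> j"
  shows "D_set j N = (\<Union>m\<in>{0..N div j}. (\<lambda>q. replicate_mset j m + q) ` Tset j N m)"
proof (rule set_eqI, rule iffI)
  fix p assume p: "p \<in> D_set j N"
  define m where "m = Min (set_mset p)"
  have ne: "p \<noteq> {#}" and sp: "sum_mset p = N" and cm: "count p m = j"
    and oth: "\<And>x. x \<in># p \<Longrightarrow> x \<noteq> m \<Longrightarrow> count p x = 1"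
    using p by (auto simp: D_set_def m_def)
  have mmin: "\<And>x. x \<in># p \<Longrightarrow> m \<le> x" unfolding m_def by simp
  define q where "q = filter_mset (\<lambda>x. x \<noteq> m) p"
  have pe: "p = replicate_mset j m + q"
    unfolding q_def by (rule multiset_eqI) (auto simp: cm)
  have "sum_mset p = j*m + sum_mset q" using pe by simp
  hence jm: "j*m \<le> N" and sq: "sum_mset q = N - j*m" using sp by auto
  have mle: "m \<le> N div j" using jm j by (simp add: less_eq_div_iff_mult_less_eq mult.commute)
  have qin: "\<And>x. x \<in># q \<Longrightarrow> x \<in># p \<and> x \<noteq> m" by (auto simp: q_def)
  have "q \<in> Tset j N m"
    unfolding Tset_def msets_def
  proof (intro CollectI conjI subsetI ballI)
    fix x assume "x \<in> set_mset q"
    hence x: "x \<in># p" "x \<noteq> m" using qin by auto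
    hence "x \<le> N" using sp mem_le_sum_mset by metis
    thus "x \<in> {Suc m..N}" using mmin[OF x(1)] x(2) by auto
  next
    show "sum_mset q = N - j*m" by (rule sq)
  next
    fix a assume "a \<in> {Suc m..N}"
    show "count q a \<le> 1"
    proof (cases "a \<in># q")
      case True thus ?thesis using qin[OF True] oth by (auto simp: q_def)
    next
      case False thus ?thesis by (simp add: not_in_iff)
    qed
  qed
  thus "p \<in> (\<Union>m\<in>{0..N div j}. (\<lambda>q. replicate_mset j m + q) ` Tset j N m)"
    using pe mle by auto
next
  fix p assume "p \<in> (\<Union>m\<in>{0..N div j}. (\<lambda>q. replicate_mset j m + q) ` Tset j N m)"
  then obtain m q where m: "m \<le> N div j" and q: "q \<in> Tset j N m" and pe: "p = replicate_mset j m + q"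
    by auto
  have jm: "j*m \<le> N" using m j by (simp add: less_eq_div_iff_mult_less_eq mult.commute)
  have qs: "set_mset q \<subseteq> {Suc m..N}" and sq: "sum_mset q = N - j*m"
    and qc: "\<And>a. a \<in> {Suc m..N} \<Longrightarrow> count q a \<le> 1"
    using q by (auto simp: Tset_def msets_def)
  have mq: "m \<notin># q" using qs by auto
  have setp: "set_mset p = insert m (set_mset q)" using pe j by auto
  have Mp: "Min (set_mset p) = m"
    unfolding setp using qs by (intro Min_eqI) auto
  show "p \<in> D_set j N"
    unfolding D_set_def
  proof (intro CollectI conjI ballI impI)
    show "p \<noteq> {#}" using pe j by auto
    show "sum_mset p = N" using pe sq jm by simp
    show "count p (Min (set_mset p)) = j" using Mp pe mq by (simp add: count_eq_zero_iff)
  next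
    fix x assume x: "x \<in># p" "x \<noteq> Min (set_mset p)"
    hence xq: "x \<in># q" using setp Mp by auto
    hence "count q x \<le> 1" using qs qc by auto
    moreover have "0 < count q x" using xq by simp
    ultimately have "count q x = 1" by linarith
    thus "count p x = 1" using pe x Mp by simp
  qed
qed

lemma Tset_neq:
  assumes j: "1 \<le> j" and mm: "m < m'" and q: "q \<in> Tset j N m" and q': "q' \<in> Tset j N m'"
  shows "replicate_mset j m + q \<noteq> replicate_mset j m' + q'"
proof
  assume e: "replicate_mset j m + q = replicate_mset j m' + q'"
  have "m \<notin># q" "m \<notin># q'" using q q' mm by (auto simp: Tset_def msets_def)
  hence "count (replicate_mset j m + q) m = j" "count (replicate_mset j m' + q') m = 0"
    using mm by (auto simp: not_in_iff)
  thus False using e j by simp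
qed

lemma D_formula:
  assumes j: "1 \<le> j"
  shows "int (D j N) = fps_nth (Fs N j) N"
proof -
  have fin: "finite (Tset j N m)" for m
    unfolding Tset_def by (rule finite_subset[OF _ finite_msets[of "{Suc m..N}"]]) auto
  have inj: "inj_on (\<lambda>q. replicate_mset j m + q) (Tset j N m)" for m
    by (auto simp: inj_on_def)
  have disj: "((\<lambda>q. replicate_mset j m + q) ` Tset j N m) \<inter> ((\<lambda>q. replicate_mset j m' + q) ` Tset j N m') = {}"
    if "m \<noteq> m'" for m m'
  proof (rule ccontr)
    assume "\<not> ?thesis"
    then obtain q q' where q: "q \<in> Tset j N m" and q': "q' \<in> Tset j N m'"
      and e: "replicate_mset j m + q = replicate_mset j m' + q'" by blast
    show False
    proof (cases "m < m'")
      case True thus False using Tset_neq[OF j True q q'] e by simp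
    next
      case False hence "m' < m" using that by simp
      thus False using Tset_neq[OF j _ q' q] e by simp
    qed
  qed
  have "int (D j N) = int (\<Sum>m\<in>{0..N div j}. card ((\<lambda>q. replicate_mset j m + q) ` Tset j N m))"
    unfolding D_def D_decomp[OF j]
    by (subst card_UN_disjoint) (auto simp: fin disj)
  also have "\<dots> = (\<Sum>m\<in>{0..N div j}. int (card (Tset j N m)))"
    by (simp add: card_image[OF inj])
  also have "\<dots> = (\<Sum>m\<in>{0..N div j}. fps_nth (Tp N m) (N - j*m))"
    unfolding Tset_def Tp_def by (intro sum.cong refl distinct_count) auto
  also have "\<dots> = (\<Sum>m\<in>{0..N}. fps_nth (qX^(j*m) * Tp N m) N)"
  proof -
    have sub: "{0..N div j} \<subseteq> {0..N}" by auto
    have "(\<Sum>m\<in>{0..N}. fps_nth (qX^(j*m) * Tp N m) N) = (\<Sum>m\<in>{0..N div j}. fps_nth (qX^(j*m) * Tp N m) N)"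
    proof (rule sum.mono_neutral_right[OF _ sub])
      show "\<forall>i\<in>{0..N} - {0..N div j}. fps_nth (qX^(j*i) * Tp N i) N = 0"
        using j by (auto simp: fps_X_power_mult_nth le_div_iff')
    qed simp
    also have "\<dots> = (\<Sum>m\<in>{0..N div j}. fps_nth (Tp N m) (N - j*m))"
      using j by (intro sum.cong refl) (auto simp: fps_X_power_mult_nth le_div_iff')
    finally show ?thesis by simp
  qed
  also have "\<dots> = fps_nth (Fs N j) N"
    unfolding Fs_def by (simp add: fps_sum_nth)
  finally show ?thesis .
qed

definition OddS :: "nat \<Rightarrow> nat set" where "OddS l = (\<lambda>i. 2*i+1) ` {..<l}"
definition EvS :: "nat \<Rightarrow> nat \<Rightarrow> nat set" where "EvS k l = (\<lambda>i. 2*l+2*i) ` {1..<k}"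

lemma mem_OddS: "a \<in> OddS l \<longleftrightarrow> odd a \<and> a < 2*l"
proof
  assume "a \<in> OddS l" thus "odd a \<and> a < 2*l" by (auto simp: OddS_def)
next
  assume a: "odd a \<and> a < 2*l"
  then obtain i where "a = 2*i+1" by (metis oddE)
  thus "a \<in> OddS l" using a by (auto simp: OddS_def)
qed

lemma mem_EvS: "a \<in> EvS k l \<longleftrightarrow> even a \<and> 2*l+2 \<le> a \<and> a \<le> 2*l+2*k-2"
proof
  assume "a \<in> EvS k l" thus "even a \<and> 2*l+2 \<le> a \<and> a \<le> 2*l+2*k-2" by (auto simp: EvS_def)
next
  assume a: "even a \<and> 2*l+2 \<le> a \<and> a \<le> 2*l+2*k-2"
  then obtain b where b: "a = 2*b" by (metis evenE)
  have "a = 2*l + 2*(b - l)" "1 \<le> b - l" "b - l < k" using a b by auto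
  thus "a \<in> EvS k l" unfolding EvS_def by (intro image_eqI[where x="b - l"]) auto
qed

lemma finite_OddS: "finite (OddS l)" by (simp add: OddS_def)
lemma finite_EvS: "finite (EvS k l)" by (simp add: EvS_def)

definition AB :: "nat \<Rightarrow> nat \<Rightarrow> nat set" where "AB k l = OddS l \<union> EvS k l"

lemma AB_pos: "0 \<notin> AB k l" by (auto simp: AB_def mem_OddS mem_EvS)
lemma finite_AB: "finite (AB k l)" by (simp add: AB_def finite_OddS finite_EvS)

definition wsgn :: "nat \<Rightarrow> int" where "wsgn c = (if c = 0 then 1 else if c = 1 then -1 else 0)"

definition wB :: "nat \<Rightarrow> nat \<Rightarrow> nat \<Rightarrow> int" where
  "wB l a c = (if odd a then (if a = 2*l-1 then (if 1 \<le> c then 1 else 0) else 1) else wsgn c)"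

lemma prod_EvS: "(\<Prod>a\<in>EvS k l. gf wsgn a) = Cp k l"
proof -
  have "(\<Prod>a\<in>EvS k l. gf wsgn a) = (\<Prod>i\<in>{1..<k}. gf wsgn (2*l+2*i))"
    unfolding EvS_def by (subst prod.reindex) (auto simp: inj_on_def)
  also have "\<dots> = Cp k l" unfolding Cp_def
    by (intro prod.cong refl) (simp add: gf_sgn[symmetric] wsgn_def[abs_def])
  finally show ?thesis .
qed

lemma GF_B:
  assumes l: "1 \<le> l"
  shows "(\<Prod>a\<in>AB k l. gf (wB l a) a) = qX^(2*l-1) * U l * Cp k l"
proof -
  obtain l' where l': "l = Suc l'" using l by (cases l) auto
  have disj: "OddS l \<inter> EvS k l = {}" by (auto simp: mem_OddS mem_EvS)
  have ev: "(\<Prod>a\<in>EvS k l. gf (wB l a) a) = Cp k l"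
  proof -
    have "(\<Prod>a\<in>EvS k l. gf (wB l a) a) = (\<Prod>a\<in>EvS k l. gf wsgn a)"
    proof (rule prod.cong[OF refl])
      fix a assume "a \<in> EvS k l"
      hence "wB l a = wsgn" by (auto simp: mem_EvS wB_def)
      thus "gf (wB l a) a = gf wsgn a" by simp
    qed
    thus ?thesis by (simp add: prod_EvS)
  qed
  have od: "(\<Prod>a\<in>OddS l. gf (wB l a) a) = qX^(2*l-1) * U l"
  proof -
    have "(\<Prod>a\<in>OddS l. gf (wB l a) a) = (\<Prod>i<l. gf (wB l (2*i+1)) (2*i+1))"
      unfolding OddS_def by (subst prod.reindex) (auto simp: inj_on_def)
    also have "\<dots> = (\<Prod>i<l'. gf (wB l (2*i+1)) (2*i+1)) * gf (wB l (2*l'+1)) (2*l'+1)"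
      unfolding l' by simp
    also have "(\<Prod>i<l'. gf (wB l (2*i+1)) (2*i+1)) = U l'"
      unfolding U_def
    proof (rule prod.cong[OF refl])
      fix i assume "i \<in> {..<l'}"
      hence "wB l (2*i+1) = (\<lambda>c. 1)" using l' by (auto simp: wB_def)
      thus "gf (wB l (2*i+1)) (2*i+1) = G (2*i+1)" by (simp add: G_def)
    qed
    also have "gf (wB l (2*l'+1)) (2*l'+1) = qX^(2*l'+1) * G (2*l'+1)"
    proof -
      have "wB l (2*l'+1) = (\<lambda>c. if 1 \<le> c then 1 else 0)" using l' by (auto simp: wB_def)
      thus ?thesis using gf_ge1[of "2*l'+1"] by simp
    qed
    also have "U l' * (qX^(2*l'+1) * G (2*l'+1)) = qX^(2*l-1) * U l"
      using l' by (simp add: U_def mult_ac)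
    finally show ?thesis .
  qed
  show ?thesis unfolding AB_def
    by (subst prod.union_disjoint) (auto simp: finite_OddS finite_EvS disj ev od mult_ac)
qed

definition lvB :: "nat multiset \<Rightarrow> nat" where "lvB p = (Max {x. x \<in># p \<and> odd x} + 1) div 2"
definition sgnE :: "nat multiset \<Rightarrow> int" where "sgnE p = (-1)^size (filter_mset even p)"
definition UB :: "nat \<Rightarrow> nat \<Rightarrow> nat multiset set" where "UB k n = B_set k True n \<union> B_set k False n"
definition WB :: "nat \<Rightarrow> nat \<Rightarrow> nat multiset \<Rightarrow> int" where
  "WB k l p = (\<Prod>a\<in>AB k l. wB l a (count p a))"

lemma UB_iff: "p \<in> UB k n \<longleftrightarrow> is_partition p n \<and> (\<exists>x\<in>#p. odd x) \<and>
   (\<forall>x\<in>#p. even x \<longrightarrow> count p x = 1 \<and> 2*lvB p + 2 \<le> x \<and> x \<le> 2*lvB p + 2*k - 2)"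
  unfolding UB_def B_set_def lvB_def Let_def by auto

lemma maxodd:
  assumes "\<exists>x\<in>#p. odd x"
  shows "Max {x. x \<in># p \<and> odd x} \<in># p" "odd (Max {x. x \<in># p \<and> odd x})"
    "\<And>x. x \<in># p \<Longrightarrow> odd x \<Longrightarrow> x \<le> Max {x. x \<in># p \<and> odd x}"
    "Max {x. x \<in># p \<and> odd x} = 2 * lvB p - 1" "1 \<le> lvB p"
proof -
  have fin: "finite {x. x \<in># p \<and> odd x}" by (rule finite_subset[of _ "set_mset p"]) auto
  have ne: "{x. x \<in># p \<and> odd x} \<noteq> {}" using assms by auto
  have M: "Max {x. x \<in># p \<and> odd x} \<in> {x. x \<in># p \<and> odd x}" using Max_in[OF fin ne] .
  thus "Max {x. x \<in># p \<and> odd x} \<in># p" "odd (Max {x. x \<in># p \<and> odd x})" by auto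
  show "\<And>x. x \<in># p \<Longrightarrow> odd x \<Longrightarrow> x \<le> Max {x. x \<in># p \<and> odd x}"
    using fin by (intro Max_ge) auto
  have o: "odd (Max {x. x \<in># p \<and> odd x})" using M by auto
  then obtain t where t: "Max {x. x \<in># p \<and> odd x} = 2*t+1" by (metis oddE)
  show "Max {x. x \<in># p \<and> odd x} = 2 * lvB p - 1" "1 \<le> lvB p"
    unfolding lvB_def t by simp_all
qed

lemma size_distinct:
  assumes "\<And>x. x \<in># M \<Longrightarrow> count M x = 1"
  shows "size M = card (set_mset M)"
proof -
  have "M = mset_set (set_mset M)"
  proof (rule multiset_eqI)
    fix x show "count M x = count (mset_set (set_mset M)) x"
      by (cases "x \<in># M") (simp_all add: assms not_in_iff)
  qed
  hence "size M = size (mset_set (set_mset M))" by simp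
  thus ?thesis by simp
qed

lemma prod_sign: "finite A \<Longrightarrow> (\<Prod>a\<in>A. (if P a then -1 else 1) :: int) = (-1)^card {a\<in>A. P a}"
proof (induction A rule: finite_induct)
  case empty thus ?case by simp
next
  case (insert x A)
  have "{a\<in>insert x A. P a} = (if P x then insert x {a\<in>A. P a} else {a\<in>A. P a})" by auto
  thus ?case using insert by (auto simp: power_Suc)
qed

lemma fiber1:
  assumes p: "p \<in> UB k n" and l: "lvB p = l"
  shows "p \<in> msets (AB k l) n" "WB k l p = sgnE p"
proof -
  have part: "is_partition p n" and ex: "\<exists>x\<in>#p. odd x"
    and ev: "\<And>x. x \<in># p \<Longrightarrow> even x \<Longrightarrow> count p x = 1 \<and> 2*l + 2 \<le> x \<and> x \<le> 2*l + 2*k - 2"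
    using p l unfolding UB_iff by auto
  note mo = maxodd[OF ex]
  have M: "Max {x. x \<in># p \<and> odd x} = 2*l - 1" "1 \<le> l" using mo(4,5) l by auto
  have sub: "set_mset p \<subseteq> AB k l"
  proof
    fix x assume x: "x \<in> set_mset p"
    show "x \<in> AB k l"
    proof (cases "odd x")
      case True thus ?thesis using mo(3)[of x] x M by (auto simp: AB_def mem_OddS)
    next
      case False thus ?thesis using ev[of x] x by (auto simp: AB_def mem_EvS)
    qed
  qed
  thus "p \<in> msets (AB k l) n" using part by (auto simp: msets_def is_partition_def)
  have disj: "OddS l \<inter> EvS k l = {}" by (auto simp: mem_OddS mem_EvS)
  have o1: "(\<Prod>a\<in>OddS l. wB l a (count p a)) = 1"
  proof (rule prod.neutral, rule ballI)
    fix a assume a: "a \<in> OddS l"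
    have "a = 2*l - 1 \<Longrightarrow> 1 \<le> count p a" using mo(1) M by (simp add: Suc_le_eq)
    thus "wB l a (count p a) = 1" using a by (auto simp: wB_def mem_OddS)
  qed
  have "(\<Prod>a\<in>EvS k l. wB l a (count p a)) = (\<Prod>a\<in>EvS k l. if a \<in># p then -1 else 1)"
  proof (rule prod.cong[OF refl])
    fix a assume a: "a \<in> EvS k l"
    hence "even a" by (simp add: mem_EvS)
    thus "wB l a (count p a) = (if a \<in># p then -1 else 1)"
      using ev[of a] by (auto simp: wB_def wsgn_def not_in_iff)
  qed
  also have "\<dots> = (-1)^card {a\<in>EvS k l. a \<in># p}" by (rule prod_sign[OF finite_EvS])
  also have "{a\<in>EvS k l. a \<in># p} = set_mset (filter_mset even p)"
    using sub by (auto simp: AB_def mem_OddS mem_EvS)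
  also have "card (set_mset (filter_mset even p)) = size (filter_mset even p)"
    by (rule size_distinct[symmetric]) (use ev in auto)
  finally have e1: "(\<Prod>a\<in>EvS k l. wB l a (count p a)) = sgnE p" by (simp add: sgnE_def)
  show "WB k l p = sgnE p" unfolding WB_def AB_def
    by (subst prod.union_disjoint) (auto simp: finite_OddS finite_EvS disj o1 e1)
qed

lemma fiber2:
  assumes l: "1 \<le> l" and p: "p \<in> msets (AB k l) n" and W: "WB k l p \<noteq> 0"
  shows "p \<in> UB k n" "lvB p = l"
proof -
  have sub: "set_mset p \<subseteq> AB k l" and sp: "sum_mset p = n" using p by (auto simp: msets_def)
  have nz: "\<And>a. a \<in> AB k l \<Longrightarrow> wB l a (count p a) \<noteq> 0"
    using W unfolding WB_def by (simp add: finite_AB)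
  have t: "2*l - 1 \<in> AB k l" using l by (auto simp: AB_def mem_OddS)
  hence "1 \<le> count p (2*l - 1)" using nz[OF t] l by (auto simp: wB_def split: if_splits)
  hence tin: "2*l - 1 \<in># p" by (simp add: Suc_le_eq)
  have ex: "\<exists>x\<in>#p. odd x" using tin l by (intro bexI[of _ "2*l-1"]) auto
  note mo = maxodd[OF ex]
  have "Max {x. x \<in># p \<and> odd x} \<in> AB k l" using mo(1) sub by auto
  hence "Max {x. x \<in># p \<and> odd x} < 2*l" using mo(2) by (auto simp: AB_def mem_OddS mem_EvS)
  moreover have "2*l - 1 \<le> Max {x. x \<in># p \<and> odd x}" using mo(3)[OF tin] l by simp
  ultimately have "Max {x. x \<in># p \<and> odd x} = 2*l - 1" by simp
  thus lv: "lvB p = l" using mo(4) l by simp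
  have ev: "count p x = 1 \<and> 2*lvB p + 2 \<le> x \<and> x \<le> 2*lvB p + 2*k - 2" if x: "x \<in># p" "even x" for x
  proof -
    have xa: "x \<in> EvS k l" using x sub by (auto simp: AB_def mem_OddS)
    hence "x \<in> AB k l" by (simp add: AB_def)
    hence "count p x \<le> 1" using nz[of x] x(2) by (auto simp: wB_def wsgn_def split: if_splits)
    moreover have "0 < count p x" using x by simp
    ultimately have "count p x = 1" by linarith
    thus ?thesis using xa lv by (auto simp: mem_EvS)
  qed
  have "is_partition p n" using sub sp AB_pos unfolding is_partition_def by (auto intro: Nat.gr0I)
  thus "p \<in> UB k n" unfolding UB_iff using ex ev by blast
qed

lemma UB_sub: "UB k n \<subseteq> msets {1..n} n"
proof
  fix p assume p: "p \<in> UB k n"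
  hence "is_partition p n" by (simp add: UB_iff)
  thus "p \<in> msets {1..n} n"
    unfolding is_partition_def msets_def using mem_le_sum_mset by (auto simp: Suc_le_eq)
qed

lemma finite_UB: "finite (UB k n)"
  by (rule finite_subset[OF UB_sub finite_msets]) auto

lemma card_diff_B: "int (B_e k n) - int (B_o k n) = (\<Sum>p\<in>UB k n. sgnE p)"
proof -
  have f: "finite (B_set k True n)" "finite (B_set k False n)"
    using finite_UB[of k n] by (auto simp: UB_def)
  have d: "B_set k True n \<inter> B_set k False n = {}" by (auto simp: B_set_def)
  have s1: "(\<Sum>p\<in>B_set k True n. sgnE p) = int (card (B_set k True n))"
    by (simp add: sgnE_def B_set_def)
  have s2: "(\<Sum>p\<in>B_set k False n. sgnE p) = - int (card (B_set k False n))"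
    by (simp add: sgnE_def B_set_def)
  show ?thesis unfolding UB_def B_e_def B_o_def
    by (subst sum.union_disjoint[OF f d]) (simp add: s1 s2)
qed

lemma B_formula:
  "int (B_e k n) - int (B_o k n) = (\<Sum>l\<in>{1..Suc n}. fps_nth (qX^(2*l-1) * U l * Cp k l) n)"
proof -
  have img: "lvB ` UB k n \<subseteq> {1..Suc n}"
  proof
    fix l assume "l \<in> lvB ` UB k n"
    then obtain p where p: "p \<in> UB k n" "l = lvB p" by auto
    have ex: "\<exists>x\<in>#p. odd x" and sp: "sum_mset p = n" using p by (auto simp: UB_iff is_partition_def)
    note mo = maxodd[OF ex]
    have "Max {x. x \<in># p \<and> odd x} \<le> n" using mo(1) sp mem_le_sum_mset by metis
    thus "l \<in> {1..Suc n}" using mo(4,5) p by auto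
  qed
  have "int (B_e k n) - int (B_o k n) = (\<Sum>l\<in>{1..Suc n}. \<Sum>p\<in>{p. p \<in> UB k n \<and> lvB p = l}. sgnE p)"
    unfolding card_diff_B by (rule sum.group[symmetric, OF finite_UB _ img]) simp
  also have "\<dots> = (\<Sum>l\<in>{1..Suc n}. \<Sum>p\<in>msets (AB k l) n. WB k l p)"
  proof (rule sum.cong[OF refl])
    fix l assume l: "l \<in> {1..Suc n}"
    show "(\<Sum>p\<in>{p. p \<in> UB k n \<and> lvB p = l}. sgnE p) = (\<Sum>p\<in>msets (AB k l) n. WB k l p)"
    proof (rule sum.mono_neutral_cong_right[symmetric])
      show "finite (msets (AB k l) n)" by (rule finite_msets[OF finite_AB AB_pos])
      show "{p. p \<in> UB k n \<and> lvB p = l} \<subseteq> msets (AB k l) n" using fiber1(1) by blast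
      show "\<forall>p\<in>msets (AB k l) n - {p. p \<in> UB k n \<and> lvB p = l}. WB k l p = 0"
        using fiber2 l by fastforce
      show "\<And>p. p \<in> {p. p \<in> UB k n \<and> lvB p = l} \<Longrightarrow> WB k l p = sgnE p"
        using fiber1(2) by blast
    qed
  qed
  also have "\<dots> = (\<Sum>l\<in>{1..Suc n}. fps_nth (qX^(2*l-1) * U l * Cp k l) n)"
  proof (rule sum.cong[OF refl])
    fix l assume l: "l \<in> {1..Suc n}"
    have "(\<Sum>p\<in>msets (AB k l) n. WB k l p) = fps_nth (\<Prod>a\<in>AB k l. gf (wB l a) a) n"
      unfolding WB_def by (rule msets_sum[OF finite_AB AB_pos])
    thus "(\<Sum>p\<in>msets (AB k l) n. WB k l p) = fps_nth (qX^(2*l-1) * U l * Cp k l) n"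
      using GF_B[of l k] l by simp
  qed
  finally show ?thesis .
qed

lemma Hs_nth: "fps_nth (Hs k (Suc n)) (Suc n) = (\<Sum>l\<in>{1..Suc n}. fps_nth (qX^(2*l-1) * U l * Cp k l) n)"
proof -
  have "fps_nth (Hs k (Suc n)) (Suc n) = (\<Sum>l\<in>{1..Suc n}. fps_nth (qX^(2*l) * Cp k l * U l) (Suc n))"
    unfolding Hs_def by (simp add: fps_sum_nth)
  also have "\<dots> = (\<Sum>l\<in>{1..Suc n}. fps_nth (qX^(2*l-1) * U l * Cp k l) n)"
  proof (rule sum.cong[OF refl])
    fix l assume l: "l \<in> {1..Suc n}"
    have eq: "qX^(2*l) * Cp k l * U l = qX * (qX^(2*l-1) * U l * Cp k l)"
    proof -
      have "qX^(2*l) = qX * qX^(2*l-1)" using l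
        by (metis Suc_pred' mult_pos_pos atLeastAtMost_iff less_le_trans power_Suc zero_less_numeral zero_less_one)
      thus ?thesis by (simp only: mult_ac)
    qed
    show "fps_nth (qX^(2*l) * Cp k l * U l) (Suc n) = fps_nth (qX^(2*l-1) * U l * Cp k l) n"
      unfolding eq by simp
  qed
  finally show ?thesis .
qed

lemma B_Hs: "int (B_e k n) - int (B_o k n) = fps_nth (Hs k (Suc n)) (Suc n)"
  by (simp add: B_formula Hs_nth)

definition AC :: "nat \<Rightarrow> nat \<Rightarrow> nat set" where "AC k l = {1..l} \<union> ({Suc l..2*l} \<union> EvS k l)"

lemma AC_pos: "0 \<notin> AC k l" by (auto simp: AC_def mem_EvS)
lemma finite_AC: "finite (AC k l)" by (simp add: AC_def finite_EvS)

definition wC :: "nat \<Rightarrow> nat \<Rightarrow> nat \<Rightarrow> int" where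
  "wC l a c = (if a \<le> l then (if c \<le> 1 then 1 else 0) else if a < 2*l then 1
     else if a = 2*l then (if 1 \<le> c then 1 else 0) else wsgn c)"

lemma U_alt: "Pm l * (\<Prod>a\<in>{Suc l..2*l}. G a) = U l"
proof -
  have "(\<Prod>a\<in>{Suc l..2*l}. G a) * Hi l = (\<Prod>a\<in>{Suc l..2*l}. G a * (1 - qX^a))"
    unfolding Hi_def by (simp add: prod.distrib)
  also have "\<dots> = 1" by (rule prod.neutral) (auto intro: G_inv)
  finally have g: "(\<Prod>a\<in>{Suc l..2*l}. G a) * Hi l = 1" .
  have "Pm l * (\<Prod>a\<in>{Suc l..2*l}. G a) * Od l = (\<Prod>a\<in>{Suc l..2*l}. G a) * (Pm l * Od l)"
    by (simp only: mult_ac)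
  also have "\<dots> = 1" using g by (simp add: Euler_fin)
  also have "\<dots> = U l * Od l" by (simp add: U_Od)
  finally have e: "Pm l * (\<Prod>a\<in>{Suc l..2*l}. G a) * Od l = U l * Od l" .
  have "Od l \<noteq> 0" using U_Od[of l] by auto
  thus ?thesis using e by simp
qed

lemma GF_C:
  assumes l: "1 \<le> l"
  shows "(\<Prod>a\<in>AC k l. gf (wC l a) a) = qX^(2*l) * Cp k l * U l"
proof -
  have d1: "{1..l} \<inter> ({Suc l..2*l} \<union> EvS k l) = {}" by (auto simp: mem_EvS)
  have d2: "{Suc l..2*l} \<inter> EvS k l = {}" by (auto simp: mem_EvS)
  have p1: "(\<Prod>a\<in>{1..l}. gf (wC l a) a) = Pm l"
    unfolding Pm_def
  proof (rule prod.cong[OF refl])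
    fix a assume a: "a \<in> {1..l}"
    hence "wC l a = (\<lambda>c. if c \<le> 1 then 1 else 0)" by (auto simp: wC_def)
    thus "gf (wC l a) a = 1 + qX^a" using a gf_le1[of a] by simp
  qed
  have p2: "(\<Prod>a\<in>{Suc l..2*l}. gf (wC l a) a) = qX^(2*l) * (\<Prod>a\<in>{Suc l..2*l}. G a)"
  proof -
    have "(\<Prod>a\<in>{Suc l..2*l}. gf (wC l a) a) = (\<Prod>a\<in>{Suc l..2*l}. (if a = 2*l then qX^(2*l) else 1) * G a)"
    proof (rule prod.cong[OF refl])
      fix a assume a: "a \<in> {Suc l..2*l}"
      show "gf (wC l a) a = (if a = 2*l then qX^(2*l) else 1) * G a"
      proof (cases "a = 2*l")
        case True
        hence "wC l a = (\<lambda>c. if 1 \<le> c then 1 else 0)" using l by (auto simp: wC_def)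
        thus ?thesis using True gf_ge1[of a] a by simp
      next
        case False
        hence "wC l a = (\<lambda>c. 1)" using a by (auto simp: wC_def)
        thus ?thesis using False by (simp add: G_def)
      qed
    qed
    also have "\<dots> = (\<Prod>a\<in>{Suc l..2*l}. if a = 2*l then qX^(2*l) else 1) * (\<Prod>a\<in>{Suc l..2*l}. G a)"
      by (rule prod.distrib)
    also have "(\<Prod>a\<in>{Suc l..2*l}. if a = 2*l then qX^(2*l) else 1) = qX^(2*l)"
      using l by (simp add: prod.delta)
    finally show ?thesis .
  qed
  have p3: "(\<Prod>a\<in>EvS k l. gf (wC l a) a) = Cp k l"
  proof -
    have "(\<Prod>a\<in>EvS k l. gf (wC l a) a) = (\<Prod>a\<in>EvS k l. gf wsgn a)"
    proof (rule prod.cong[OF refl])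
      fix a assume "a \<in> EvS k l"
      hence "wC l a = wsgn" by (auto simp: mem_EvS wC_def)
      thus "gf (wC l a) a = gf wsgn a" by simp
    qed
    thus ?thesis by (simp add: prod_EvS)
  qed
  have "(\<Prod>a\<in>AC k l. gf (wC l a) a) = Pm l * (qX^(2*l) * (\<Prod>a\<in>{Suc l..2*l}. G a) * Cp k l)"
    unfolding AC_def
    by (subst prod.union_disjoint[OF _ _ d1], simp, simp add: finite_EvS,
        subst prod.union_disjoint[OF _ _ d2], simp, simp add: finite_EvS, simp only: p1 p2 p3)
  also have "\<dots> = qX^(2*l) * Cp k l * (Pm l * (\<Prod>a\<in>{Suc l..2*l}. G a))" by (simp only: mult_ac)
  finally show ?thesis by (simp add: U_alt)
qed

definition sgnC :: "nat multiset \<times> nat \<Rightarrow> int" where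
  "sgnC x = (-1)^size (filter_mset (\<lambda>y. 2 * snd x < y) (fst x))"
definition UC :: "nat \<Rightarrow> nat \<Rightarrow> (nat multiset \<times> nat) set" where
  "UC k N = C_set k True N \<union> C_set k False N"
definition WC :: "nat \<Rightarrow> nat \<Rightarrow> nat multiset \<Rightarrow> int" where
  "WC k l p = (\<Prod>a\<in>AC k l. wC l a (count p a))"

lemma UC_iff: "(p, l) \<in> UC k N \<longleftrightarrow> 1 \<le> l \<and> is_partition p N \<and> 2*l \<in># p \<and>
     (\<forall>x\<in>#p. x \<le> l \<longrightarrow> count p x = 1) \<and>
     (\<forall>x\<in>#p. 2*l < x \<longrightarrow> (even x \<and> count p x = 1 \<and> 2*l + 2 \<le> x \<and> x \<le> 2*l + 2*k - 2))"
  unfolding UC_def C_set_def by auto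

lemma fiberC1:
  assumes pl: "(p, l) \<in> UC k N"
  shows "p \<in> msets (AC k l) N" "WC k l p = sgnC (p, l)"
proof -
  have l: "1 \<le> l" and part: "is_partition p N" and t: "2*l \<in># p"
    and lo: "\<And>x. x \<in># p \<Longrightarrow> x \<le> l \<Longrightarrow> count p x = 1"
    and hi: "\<And>x. x \<in># p \<Longrightarrow> 2*l < x \<Longrightarrow> even x \<and> count p x = 1 \<and> 2*l + 2 \<le> x \<and> x \<le> 2*l + 2*k - 2"
    using pl unfolding UC_iff by auto
  have sub: "set_mset p \<subseteq> AC k l"
  proof
    fix x assume x: "x \<in> set_mset p"
    have "0 < x" using part x by (auto simp: is_partition_def)
    thus "x \<in> AC k l" using hi[of x] x by (cases "2*l < x") (auto simp: AC_def mem_EvS)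
  qed
  thus "p \<in> msets (AC k l) N" using part by (auto simp: msets_def is_partition_def)
  have "WC k l p = (\<Prod>a\<in>AC k l. if a \<in> EvS k l \<and> a \<in># p then -1 else 1)"
    unfolding WC_def
  proof (rule prod.cong[OF refl])
    fix a assume a: "a \<in> AC k l"
    show "wC l a (count p a) = (if a \<in> EvS k l \<and> a \<in># p then -1 else 1)"
    proof (cases "a \<in> EvS k l")
      case True
      hence "2*l < a" by (auto simp: mem_EvS)
      thus ?thesis using True hi[of a] by (auto simp: wC_def wsgn_def not_in_iff)
    next
      case False
      hence a2: "a \<le> 2*l" using a by (auto simp: AC_def)
      have "a \<le> l \<Longrightarrow> count p a \<le> 1" using lo[of a] by (cases "a \<in># p") (auto simp: not_in_iff)
      moreover have "a = 2*l \<Longrightarrow> 1 \<le> count p a" using t by (simp add: Suc_le_eq)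
      ultimately show ?thesis using False a2 by (auto simp: wC_def)
    qed
  qed
  also have "\<dots> = (-1)^card {a\<in>AC k l. a \<in> EvS k l \<and> a \<in># p}" by (rule prod_sign[OF finite_AC])
  also have "{a\<in>AC k l. a \<in> EvS k l \<and> a \<in># p} = set_mset (filter_mset (\<lambda>y. 2 * l < y) p)"
  proof (rule set_eqI, rule iffI)
    fix a assume "a \<in> {a\<in>AC k l. a \<in> EvS k l \<and> a \<in># p}"
    thus "a \<in> set_mset (filter_mset (\<lambda>y. 2 * l < y) p)" by (auto simp: mem_EvS)
  next
    fix a assume a: "a \<in> set_mset (filter_mset (\<lambda>y. 2 * l < y) p)"
    hence "a \<in># p" "2*l < a" by auto
    thus "a \<in> {a\<in>AC k l. a \<in> EvS k l \<and> a \<in># p}" using hi[of a] sub by (auto simp: mem_EvS)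
  qed
  also have "card (set_mset (filter_mset (\<lambda>y. 2 * l < y) p)) = size (filter_mset (\<lambda>y. 2 * l < y) p)"
    by (rule size_distinct[symmetric]) (use hi in auto)
  finally show "WC k l p = sgnC (p, l)" by (simp add: sgnC_def)
qed

lemma fiberC2:
  assumes l: "1 \<le> l" and p: "p \<in> msets (AC k l) N" and W: "WC k l p \<noteq> 0"
  shows "(p, l) \<in> UC k N"
proof -
  have sub: "set_mset p \<subseteq> AC k l" and sp: "sum_mset p = N" using p by (auto simp: msets_def)
  have nz: "\<And>a. a \<in> AC k l \<Longrightarrow> wC l a (count p a) \<noteq> 0"
    using W unfolding WC_def by (simp add: finite_AC)
  have t: "2*l \<in> AC k l" using l by (auto simp: AC_def)
  hence "1 \<le> count p (2*l)" using nz[OF t] l by (auto simp: wC_def split: if_splits)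
  hence tin: "2*l \<in># p" by (simp add: Suc_le_eq)
  have lo: "count p x = 1" if x: "x \<in># p" "x \<le> l" for x
  proof -
    have "x \<in> AC k l" using x sub by auto
    hence "count p x \<le> 1" using nz[of x] x(2) by (auto simp: wC_def split: if_splits)
    moreover have "0 < count p x" using x by simp
    ultimately show ?thesis by linarith
  qed
  have hi: "even x \<and> count p x = 1 \<and> 2*l + 2 \<le> x \<and> x \<le> 2*l + 2*k - 2" if x: "x \<in># p" "2*l < x" for x
  proof -
    have xa: "x \<in> EvS k l" using x sub by (auto simp: AC_def)
    hence "x \<in> AC k l" by (simp add: AC_def)
    hence "count p x \<le> 1" using nz[of x] x(2) by (auto simp: wC_def wsgn_def split: if_splits)
    moreover have "0 < count p x" using x by simp
    ultimately have "count p x = 1" by linarith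
    thus ?thesis using xa by (auto simp: mem_EvS)
  qed
  have "is_partition p N" using sub sp AC_pos unfolding is_partition_def by (auto intro: Nat.gr0I)
  thus "(p, l) \<in> UC k N" unfolding UC_iff using l tin lo hi by blast
qed

lemma UC_bound: "(p, l) \<in> UC k N \<Longrightarrow> l \<in> {1..N} \<and> p \<in> msets {1..N} N"
proof -
  assume pl: "(p, l) \<in> UC k N"
  hence l: "1 \<le> l" and part: "is_partition p N" and t: "2*l \<in># p" by (auto simp: UC_iff)
  have "2*l \<le> N" using t part mem_le_sum_mset by (auto simp: is_partition_def)
  moreover have "p \<in> msets {1..N} N"
    using part mem_le_sum_mset unfolding is_partition_def msets_def by (auto simp: Suc_le_eq)
  ultimately show ?thesis using l by auto
qed

lemma finite_UC: "finite (UC k N)"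
proof (rule finite_subset)
  show "UC k N \<subseteq> msets {1..N} N \<times> {1..N}" using UC_bound by auto
  show "finite (msets {1..N} N \<times> {1..N})" by (intro finite_cartesian_product finite_msets) auto
qed

lemma card_diff_C: "int (C_e k N) - int (C_o k N) = (\<Sum>x\<in>UC k N. sgnC x)"
proof -
  have f: "finite (C_set k True N)" "finite (C_set k False N)"
    using finite_UC[of k N] by (auto simp: UC_def)
  have d: "C_set k True N \<inter> C_set k False N = {}" by (auto simp: C_set_def)
  have s1: "(\<Sum>x\<in>C_set k True N. sgnC x) = int (card (C_set k True N))"
  proof -
    have "(\<Sum>x\<in>C_set k True N. sgnC x) = (\<Sum>x\<in>C_set k True N. 1)"
      by (rule sum.cong[OF refl]) (auto simp: sgnC_def C_set_def)
    thus ?thesis by simp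
  qed
  have s2: "(\<Sum>x\<in>C_set k False N. sgnC x) = - int (card (C_set k False N))"
  proof -
    have "(\<Sum>x\<in>C_set k False N. sgnC x) = (\<Sum>x\<in>C_set k False N. -1)"
      by (rule sum.cong[OF refl]) (auto simp: sgnC_def C_set_def)
    thus ?thesis by simp
  qed
  show ?thesis unfolding UC_def C_e_def C_o_def
    by (subst sum.union_disjoint[OF f d]) (simp add: s1 s2)
qed

lemma C_Hs: "int (C_e k N) - int (C_o k N) = fps_nth (Hs k N) N"
proof -
  have img: "snd ` UC k N \<subseteq> {1..N}" using UC_bound by force
  have "int (C_e k N) - int (C_o k N) = (\<Sum>l\<in>{1..N}. \<Sum>x\<in>{x. x \<in> UC k N \<and> snd x = l}. sgnC x)"
    unfolding card_diff_C by (rule sum.group[symmetric, OF finite_UC _ img]) simp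
  also have "\<dots> = (\<Sum>l\<in>{1..N}. \<Sum>p\<in>msets (AC k l) N. WC k l p)"
  proof (rule sum.cong[OF refl])
    fix l assume l: "l \<in> {1..N}"
    have fib: "{x. x \<in> UC k N \<and> snd x = l} = (\<lambda>p. (p, l)) ` {p. (p, l) \<in> UC k N}" by force
    have "(\<Sum>x\<in>{x. x \<in> UC k N \<and> snd x = l}. sgnC x) = (\<Sum>p\<in>{p. (p, l) \<in> UC k N}. sgnC (p, l))"
      unfolding fib by (subst sum.reindex) (auto simp: inj_on_def)
    also have "\<dots> = (\<Sum>p\<in>msets (AC k l) N. WC k l p)"
    proof (rule sum.mono_neutral_cong_right[symmetric])
      show "finite (msets (AC k l) N)" by (rule finite_msets[OF finite_AC AC_pos])
      show "{p. (p, l) \<in> UC k N} \<subseteq> msets (AC k l) N" using fiberC1(1) by blast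
      show "\<forall>p\<in>msets (AC k l) N - {p. (p, l) \<in> UC k N}. WC k l p = 0"
        using fiberC2 l by fastforce
      show "\<And>p. p \<in> {p. (p, l) \<in> UC k N} \<Longrightarrow> WC k l p = sgnC (p, l)"
        using fiberC1(2) by blast
    qed
    finally show "(\<Sum>x\<in>{x. x \<in> UC k N \<and> snd x = l}. sgnC x) = (\<Sum>p\<in>msets (AC k l) N. WC k l p)" .
  qed
  also have "\<dots> = (\<Sum>l\<in>{1..N}. fps_nth (qX^(2*l) * Cp k l * U l) N)"
  proof (rule sum.cong[OF refl])
    fix l assume l: "l \<in> {1..N}"
    have "(\<Sum>p\<in>msets (AC k l) N. WC k l p) = fps_nth (\<Prod>a\<in>AC k l. gf (wC l a) a) N"
      unfolding WC_def by (rule msets_sum[OF finite_AC AC_pos])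
    thus "(\<Sum>p\<in>msets (AC k l) N. WC k l p) = fps_nth (qX^(2*l) * Cp k l * U l) N"
      using GF_C[of l k] l by simp
  qed
  also have "\<dots> = fps_nth (Hs k N) N" unfolding Hs_def by (simp add: fps_sum_nth)
  finally show ?thesis .
qed

theorem theorem3:
  fixes k n :: nat
  assumes "1 \<le> k"
    and "2 ^ (k - 1) * k * (2 * k - 1) \<le> n"
  shows "int (B_e k n) - int (B_o k n) = int (C_e k (n + 1)) - int (C_o k (n + 1))
       \<and> 2 * (int (C_e k (n + 1)) - int (C_o k (n + 1))) = int (D (2 * k) (n + 1))"
proof
  show "int (B_e k n) - int (B_o k n) = int (C_e k (n + 1)) - int (C_o k (n + 1))"
    using B_Hs[of k n] C_Hs[of k "Suc n"] by simp
next
  have h: "k * (2 * k - 1) \<le> 2 ^ (k - 1) * k * (2 * k - 1)"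
    using mult_le_mono1[of 1 "2 ^ (k - 1)" "k * (2 * k - 1)"] by (simp add: mult.assoc)
  have lt: "k * (2 * k - 1) < Suc n" using h assms(2) by linarith
  have "2 * fps_nth (Hs k (Suc n)) (Suc n) = fps_nth (Fs (Suc n) (2 * k)) (Suc n)"
    by (rule main_coeff[OF assms(1) lt])
  moreover have "int (D (2 * k) (Suc n)) = fps_nth (Fs (Suc n) (2 * k)) (Suc n)"
    by (rule D_formula) (use assms(1) in simp)
  ultimately show "2 * (int (C_e k (n + 1)) - int (C_o k (n + 1))) = int (D (2 * k) (n + 1))"
    using C_Hs[of k "Suc n"] by simp
qed

end
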